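(* In the setting described in the context, the elements $\exp(t_1),\dots,\exp(t_n)$ together with the elements $t^*(g\otimes g')=\exp\bigl(t(g\otimes g')\bigr)$, where $(g,g')$ ranges over pairs of elements of $\mathcal G(\overline{\mathbb{Q}\{\boldsymbol{X}\}})\setminus\{1\}$, freely generate a (free) abelian subgroup of the multiplicative group $\mathcal G(\overline{\mathbb{Q}[T]})$; that is, if $e_1,\dots,e_n,d_1,\dots,d_m\in\mathbb{Z}$ and $(g_1,g_1'),\dots,(g_m,g_m')$ are pairwise distinct pairs in $\mathcal G(\overline{\mathbb{Q}\{\boldsymbol{X}\}})\setminus\{1\}$ with $\exp(t_1)^{e_1}\cdots\exp(t_n)^{e_n}t^*(g_1\otimes g_1')^{d_1}\cdots t^*(g_m\otimes g_m')^{d_m}=1$, then all $e_i$ and $d_j$ are zero.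
   Context: Let $\boldsymbol{X}=\{X_1,\dots,X_n\}$ and let $\mathbb{Q}\{\boldsymbol{X}\}$ be the free non-associative algebra over $\mathbb{Q}$ on $\boldsymbol{X}$, made into a (non-associative) Hopf algebra by declaring each $X_i$ primitive ($\Delta X_i=X_i\otimes1+1\otimes X_i$, $\Delta$ multiplicative, counit $\epsilon$). Let $\overline{\mathbb{Q}\{\boldsymbol{X}\}}$ be its completion with respect to degree (non-associative formal power series), with the coproduct extended to the completed tensor product. $\mathcal G(H)$ denotes the set of group-like elements, i.e. $g$ with $\Delta(g)=g\otimes g$ and $\epsilon(g)=1$. Let $m(\boldsymbol{X})$ be the set of non-associative monomials in $\boldsymbol{X}$ of degree $\ge1$, and $T$ the set of formal symbols $\{t_1,\dots,t_n\}\sqcup\{t(m_1,m_2)\mid m_1,m_2\in m(\boldsymbol{X})\}$, graded by $|t_i|=1$, $|t(m_1,m_2)|=|m_1|+|m_2|$. $\mathbb{Q}[T]$ is the commutative associative polynomial algebra on $T$, a Hopf algebra with all elements of $T$ primitive, and $\overline{\mathbb{Q}[T]}$ its completion with respect to degree. Let $t$ be the linear map from $\mathbb{Q}\{\boldsymbol{X}\}\otimes\mathbb{Q}\{\boldsymbol{X}\}$ to the span of $T$ given by $t(m_1\otimes m_2)=t(m_1,m_2)$ for $m_1,m_2\in m(\boldsymbol{X})$ and $t(m_1\otimes1)=t(1\otimes m_2)=t(1\otimes1)=0$, extended to the degree completions. For $g,g'$ group-like, $t^*(g\otimes g')$ denotes $\exp(t(g\otimes g'))\in\overline{\mathbb{Q}[T]}$,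 where $\exp$ is the usual exponential series. *)

theory Defs
  imports Complex_Main "HOL-Library.Multiset"
begin

text \<open>Non-associative monomials of degree at least 1 (binary trees with leaves Var i).
  The basis of Q{X} is {1} union m(X); we encode it as nmon option, None being 1.\<close>

datatype nmon = Var nat | Mul nmon nmon

fun nvalid :: "nat \<Rightarrow> nmon \<Rightarrow> bool" where
  "nvalid n (Var i) = (i < n)"
| "nvalid n (Mul a b) = (nvalid n a \<and> nvalid n b)"

fun omul :: "nmon option \<Rightarrow> nmon option \<Rightarrow> nmon option" where
  "omul None b = b"
| "omul a None = a"
| "omul (Some a) (Some b) = Some (Mul a b)"

text \<open>Coproduct of a monomial, as a list of simple tensors (with multiplicity):
  generators primitive, coproduct multiplicative.\<close>
fun cop :: "nmon \<Rightarrow> (nmon option \<times> nmon option) list" where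
  "cop (Var i) = [(Some (Var i), None), (None, Some (Var i))]"
| "cop (Mul a b) = [(omul u u', omul v v'). (u, v) \<leftarrow> cop a, (u', v') \<leftarrow> cop b]"

definition ocop :: "nmon option \<Rightarrow> (nmon option \<times> nmon option) list" where
  "ocop w = (case w of None \<Rightarrow> [(None, None)] | Some m \<Rightarrow> cop m)"

text \<open>Elements of the degree completion: arbitrary coefficient functions on the basis.\<close>
type_synonym nser = "nmon option \<Rightarrow> rat"

text \<open>Coproduct into the completed tensor product (coefficient of p \<otimes> q).\<close>
definition ncoprod :: "nser \<Rightarrow> (nmon option \<times> nmon option \<Rightarrow> rat)" where
  "ncoprod f = (\<lambda>(p, q). \<Sum>w \<in> {w. (p, q) \<in> set (ocop w)}.
       f w * of_nat (count_list (ocop w) (p, q)))"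

definition nsone :: nser where
  "nsone = (\<lambda>w. if w = None then 1 else 0)"

definition ngrouplike :: "nat \<Rightarrow> nser \<Rightarrow> bool" where
  "ngrouplike n g \<longleftrightarrow>
     (\<forall>m. g (Some m) \<noteq> 0 \<longrightarrow> nvalid n m) \<and>
     g None = 1 \<and>
     ncoprod g = (\<lambda>(p, q). g p * g q)"

section \<open>The completed commutative polynomial algebra on T\<close>

datatype tsym = TI nat | TP nmon nmon

type_synonym tser = "tsym multiset \<Rightarrow> rat"

definition tmul :: "tser \<Rightarrow> tser \<Rightarrow> tser" where
  "tmul F G = (\<lambda>M. \<Sum>A \<in> {A. A \<subseteq># M}. F A * G (M - A))"

definition tone :: tser where
  "tone = (\<lambda>M. if M = {#} then 1 else 0)"

definition tpow :: "tser \<Rightarrow> nat \<Rightarrow> tser" where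
  "tpow F k = (tmul F ^^ k) tone"

text \<open>Exponential series, for arguments without constant term (only finitely many
  powers contribute to each coefficient).\<close>
definition texp :: "tser \<Rightarrow> tser" where
  "texp u = (\<lambda>M. \<Sum>k \<le> size M. tpow u k M / of_nat (fact k))"

definition tinv :: "tser \<Rightarrow> tser" where
  "tinv F = (THE G. tmul F G = tone)"

definition tipow :: "tser \<Rightarrow> int \<Rightarrow> tser" where
  "tipow F z = (if 0 \<le> z then tpow F (nat z) else tpow (tinv F) (nat (- z)))"

definition tlist_prod :: "tser list \<Rightarrow> tser" where
  "tlist_prod Fs = foldr tmul Fs tone"

text \<open>The element t_(i+1) (0-indexed as TI i).\<close>
definition tgen :: "tsym \<Rightarrow> tser" where
  "tgen s = (\<lambda>M. if M = {#s#} then 1 else 0)"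

definition tt :: "nser \<Rightarrow> nser \<Rightarrow> tser" where
  "tt g g' = (\<lambda>M. \<Sum>(a, b) \<in> {(a, b). M = {#TP a b#}}. g (Some a) * g' (Some b))"

definition tstar :: "nser \<Rightarrow> nser \<Rightarrow> tser" where
  "tstar g g' = texp (tt g g')"

end

theory Submission imports Defs begin
lemma fin_sub: "finite {A. A \<subseteq># (M::'a multiset)}"
proof (induction M)
  case empty then show ?case by simp
next
  case (add x M)
  have "{A. A \<subseteq># add_mset x M} \<subseteq> {A. A \<subseteq># M} \<union> add_mset x ` {A. A \<subseteq># M}"
  proof
    fix A assume "A \<in> {A. A \<subseteq># add_mset x M}"
    then have A: "A \<subseteq># add_mset x M" by simp
    show "A \<in> {A. A \<subseteq># M} \<union> add_mset x ` {A. A \<subseteq># M}"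
    proof (cases "x \<in># A")
      case True
      then have "A = add_mset x (A - {#x#})" by simp
      moreover have "A - {#x#} \<subseteq># M" using A
        by (metis add_mset_add_single subset_eq_diff_conv)
      ultimately show ?thesis by blast
    next
      case False
      then have "A \<subseteq># M" using A
        by (metis Diff_eq_empty_iff_mset minus_add_mset_if_not_in_lhs)
      then show ?thesis by blast
    qed
  qed
  then show ?case using add by (meson finite_UnI finite_imageI finite_subset)
qed

lemma tmul_split:
  "tmul F G M = F {#} * G M + (\<Sum>A\<in>{A. A \<subseteq># M \<and> A \<noteq> {#}}. F A * G (M - A))"
proof -
  have e: "{A. A \<subseteq># M} = insert {#} {A. A \<subseteq># M \<and> A \<noteq> {#}}" by auto
  have f: "finite {A. A \<subseteq># M \<and> A \<noteq> {#}}"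
    by (rule finite_subset[OF _ fin_sub[of M]]) auto
  show ?thesis unfolding tmul_def e using f by (simp add: sum.insert)
qed

lemma tmul_empty: "tmul F G {#} = F {#} * G {#}"
  unfolding tmul_split by simp

lemma sub_single: "{A. A \<subseteq># {#s#}} = {{#}, {#s#}}"
  using nonempty_subseteq_mset_eq_single by auto

lemma tmul_single: "tmul F G {#s#} = F {#} * G {#s#} + F {#s#} * G {#}"
  unfolding tmul_def sub_single by simp

lemma tone_simps: "tone {#} = 1" "tone {#s#} = 0"
  unfolding tone_def by auto

function ia :: "tser \<Rightarrow> tsym multiset \<Rightarrow> rat" where
"ia F M = (if M = {#} then 1 else - (\<Sum>A\<in>{A. A \<subseteq># M \<and> A \<noteq> {#}}. F A * ia F (M - A)))"
  by auto
termination
  apply (relation "measure (size o snd)")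
  apply auto
  by (simp add: nonempty_has_size size_Diff_submset)

declare ia.simps[simp del]

lemma ia_inv: assumes "F {#} = 1" shows "tmul F (ia F) = tone"
proof
  fix M
  show "tmul F (ia F) M = tone M"
  proof (cases "M = {#}")
    case True then show ?thesis using assms by (simp add: tmul_empty tone_simps ia.simps)
  next
    case False
    then show ?thesis using assms unfolding tmul_split
      by (subst ia.simps) (simp add: tone_def)
  qed
qed

lemma inv_unique:
  assumes "F {#} = 1" "tmul F G = tmul F G'"
  shows "G = G'"
proof
  fix M
  show "G M = G' M"
  proof (induction M rule: measure_induct_rule[where f = size])
    case (less M)
    have "\<And>A. A \<in> {A. A \<subseteq># M \<and> A \<noteq> {#}} \<Longrightarrow> G (M - A) = G' (M - A)"
    proof -
      fix A assume "A \<in> {A. A \<subseteq># M \<and> A \<noteq> {#}}"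
      then have "size (M - A) < size M"
        using size_mset_mono[of A M] nonempty_has_size[of A]
        by (auto simp: size_Diff_submset)
      then show "G (M - A) = G' (M - A)" using less by simp
    qed
    then have "(\<Sum>A\<in>{A. A \<subseteq># M \<and> A \<noteq> {#}}. F A * G (M - A))
             = (\<Sum>A\<in>{A. A \<subseteq># M \<and> A \<noteq> {#}}. F A * G' (M - A))"
      by (intro sum.cong) auto
    moreover have "tmul F G M = tmul F G' M" using assms by simp
    ultimately show ?case using assms unfolding tmul_split by simp
  qed
qed

lemma tinv_ok: assumes "F {#} = 1" shows "tmul F (tinv F) = tone"
proof -
  have "\<exists>!G. tmul F G = tone"
    using ia_inv[of F, OF assms] inv_unique[of F, OF assms] by metis
  then show ?thesis unfolding tinv_def by (rule theI')
qed

lemma tinv_simps: assumes "F {#} = 1"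
  shows "tinv F {#} = 1" "tinv F {#s#} = - F {#s#}"
proof -
  have a: "tmul F (tinv F) {#} = 1" "tmul F (tinv F) {#s#} = 0"
    using tinv_ok[of F, OF assms] tone_simps by auto
  show 1: "tinv F {#} = 1" using a(1) assms by (simp add: tmul_empty)
  show "tinv F {#s#} = - F {#s#}" using a(2) assms 1 by (simp add: tmul_single)
qed

lemma tpow_simps: assumes "F {#} = 1"
  shows "tpow F k {#} = 1 \<and> tpow F k {#s#} = of_nat k * F {#s#}"
proof (induction k)
  case 0 then show ?case by (simp add: tpow_def tone_simps)
next
  case (Suc k)
  have e: "tpow F (Suc k) = tmul F (tpow F k)" by (simp add: tpow_def)
  show ?case using Suc assms unfolding e by (simp add: tmul_empty tmul_single algebra_simps)
qed

lemma tipow_simps: assumes "F {#} = 1"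
  shows "tipow F z {#} = 1" "tipow F z {#s#} = of_int z * F {#s#}"
proof -
  have "tipow F z {#} = 1 \<and> tipow F z {#s#} = of_int z * F {#s#}"
  proof (cases "0 \<le> z")
    case True then show ?thesis using tpow_simps[of F "nat z" s, OF assms] by (simp add: tipow_def)
  next
    case False then show ?thesis
      using tpow_simps[of "tinv F" "nat (-z)" s] tinv_simps(1)[of F, OF assms] tinv_simps(2)[of F s, OF assms] by (simp add: tipow_def)
  qed
  then show "tipow F z {#} = 1" "tipow F z {#s#} = of_int z * F {#s#}" by auto
qed

lemma tlist_prod_simps: assumes "\<forall>F\<in>set Fs. F {#} = 1"
  shows "tlist_prod Fs {#} = 1 \<and> tlist_prod Fs {#s#} = (\<Sum>F\<leftarrow>Fs. F {#s#})"
  using assms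
  by (induction Fs) (auto simp: tlist_prod_def tone_simps tmul_empty tmul_single)

lemma texp_simps: "texp u {#} = 1" "texp u {#s#} = u {#s#}"
  by (auto simp: texp_def tpow_def tone_simps tmul_single)
  
lemma tgen_single: "tgen t {#s#} = (if s = t then 1 else 0)"
  unfolding tgen_def by auto

lemma tt_TI: "tt g g' {#TI i#} = 0"
  unfolding tt_def by simp

lemma tt_TP: "tt g g' {#TP a b#} = g (Some a) * g' (Some b)"
proof -
  have "{(x, y). {#TP a b#} = {#TP x y#}} = {(a, b)}" by auto
  then show ?thesis unfolding tt_def by simp
qed
lemma artin:
  fixes C :: "('x \<Rightarrow> rat) set" and W :: "'x \<Rightarrow> 'x \<Rightarrow> 'x set" and c :: "'x \<Rightarrow> 'x \<Rightarrow> 'x \<Rightarrow> rat"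
  assumes mult: "\<And>\<chi> p q. \<chi> \<in> C \<Longrightarrow> \<chi> p * \<chi> q = (\<Sum>w\<in>W p q. c p q w * \<chi> w)"
    and nz: "\<And>\<chi>. \<chi> \<in> C \<Longrightarrow> \<chi> u = 1"
    and fin: "finite S" and sub: "S \<subseteq> C"
    and rel: "\<And>p. (\<Sum>\<chi>\<in>S. a \<chi> * \<chi> p) = 0"
  shows "\<forall>\<chi>\<in>S. a \<chi> = 0"
  using fin sub rel
proof (induction S arbitrary: a rule: finite_induct)
  case empty then show ?case by simp
next
  case (insert \<chi>0 S)
  have rel0: "\<And>p. a \<chi>0 * \<chi>0 p + (\<Sum>\<chi>\<in>S. a \<chi> * \<chi> p) = 0"
    using insert.prems(2) insert.hyps by (simp add: sum.insert)
  have b: "\<forall>\<chi>\<in>S. a \<chi> * (\<chi> y - \<chi>0 y) = 0" for y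
  proof -
    have "(\<Sum>\<chi>\<in>S. (a \<chi> * (\<chi> y - \<chi>0 y)) * \<chi> p) = 0" for p
    proof -
      have A: "(\<Sum>\<chi>\<in>insert \<chi>0 S. a \<chi> * \<chi> y * \<chi> p) = 0"
      proof -
        have "(\<Sum>\<chi>\<in>insert \<chi>0 S. a \<chi> * \<chi> y * \<chi> p)
            = (\<Sum>\<chi>\<in>insert \<chi>0 S. a \<chi> * (\<Sum>w\<in>W y p. c y p w * \<chi> w))"
          using insert.prems(1) mult by (intro sum.cong) (auto simp: mult.assoc)
        also have "\<dots> = (\<Sum>\<chi>\<in>insert \<chi>0 S. \<Sum>w\<in>W y p. c y p w * (a \<chi> * \<chi> w))"
          by (simp add: sum_distrib_left mult.commute mult.left_commute)
        also have "\<dots> = (\<Sum>w\<in>W y p. \<Sum>\<chi>\<in>insert \<chi>0 S. c y p w * (a \<chi> * \<chi> w))"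
          by (rule sum.swap)
        also have "\<dots> = (\<Sum>w\<in>W y p. c y p w * (\<Sum>\<chi>\<in>insert \<chi>0 S. a \<chi> * \<chi> w))"
          by (simp add: sum_distrib_left)
        also have "\<dots> = 0" using insert.prems(2) by simp
        finally show ?thesis .
      qed
      have B: "(\<Sum>\<chi>\<in>insert \<chi>0 S. \<chi>0 y * (a \<chi> * \<chi> p)) = 0"
        using insert.prems(2)[of p] by (simp add: sum_distrib_left[symmetric])
      have "(\<Sum>\<chi>\<in>insert \<chi>0 S. (a \<chi> * (\<chi> y - \<chi>0 y)) * \<chi> p) = 0"
        using A B by (simp add: algebra_simps sum_subtractf)
      then show ?thesis using insert.hyps by (simp add: sum.insert)
    qed
    then show ?thesis using insert.IH[of "\<lambda>\<chi>. a \<chi> * (\<chi> y - \<chi>0 y)"] insert.prems(1) by blast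
  qed
  have aS: "\<forall>\<chi>\<in>S. a \<chi> = 0"
  proof
    fix \<chi> assume "\<chi> \<in> S"
    then have "\<chi> \<noteq> \<chi>0" using insert.hyps by auto
    then obtain y where "\<chi> y \<noteq> \<chi>0 y" by auto
    then show "a \<chi> = 0" using b[of y] \<open>\<chi> \<in> S\<close> by auto
  qed
  then have "a \<chi>0 * \<chi>0 u = 0" using rel0[of u] by simp
  moreover have "\<chi>0 u = 1" using nz insert.prems(1) by auto
  ultimately have "a \<chi>0 = 0" by simp
  then show ?case using aS by auto
qed
definition Wn :: "nmon option \<Rightarrow> nmon option \<Rightarrow> nmon option set" where
  "Wn p q = {w. (p, q) \<in> set (ocop w)}"

definition cn :: "nmon option \<Rightarrow> nmon option \<Rightarrow> nmon option \<Rightarrow> rat" where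
  "cn p q w = of_nat (count_list (ocop w) (p, q))"

definition char1 :: "nser \<Rightarrow> bool" where
  "char1 g \<longleftrightarrow> g None = 1 \<and> (\<forall>p q. g p * g q = (\<Sum>w\<in>Wn p q. cn p q w * g w))"

lemma grouplike_char1: assumes "ngrouplike n g" shows "char1 g"
proof -
  have g1: "g None = 1" and cp: "ncoprod g = (\<lambda>(p, q). g p * g q)"
    using assms unfolding ngrouplike_def by auto
  have "g p * g q = (\<Sum>w\<in>Wn p q. cn p q w * g w)" for p q
  proof -
    have "ncoprod g (p, q) = g p * g q" using cp by simp
    then show ?thesis unfolding ncoprod_def Wn_def cn_def by (simp add: mult.commute)
  qed
  then show ?thesis using g1 unfolding char1_def by auto
qed

lemma omul_None: "omul u v = None \<longleftrightarrow> u = None \<and> v = None"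
  by (cases u; cases v) auto

lemma omul_None': "None = omul u v \<longleftrightarrow> u = None \<and> v = None"
  by (cases u; cases v) auto

lemma cop_nn: "(None, None) \<notin> set (cop m)"
  by (induction m) (auto simp: omul_None omul_None')

lemma nsone_char1: "char1 nsone"
proof -
  have "nsone p * nsone q = (\<Sum>w\<in>Wn p q. cn p q w * nsone w)" for p q
  proof (cases "p = None \<and> q = None")
    case True
    have "Wn p q = {None}" using True cop_nn
      by (auto simp: Wn_def ocop_def split: option.splits)
    then show ?thesis using True by (simp add: cn_def nsone_def ocop_def)
  next
    case False
    have "\<forall>w\<in>Wn p q. cn p q w * nsone w = 0"
      using False by (auto simp: Wn_def nsone_def ocop_def)
    then have "(\<Sum>w\<in>Wn p q. cn p q w * nsone w) = 0" by (intro sum.neutral) auto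
    then show ?thesis using False by (auto simp: nsone_def)
  qed
  then show ?thesis unfolding char1_def by (simp add: nsone_def)
qed

definition PC :: "(nmon option \<times> nmon option \<Rightarrow> rat) set" where
  "PC = {\<chi>. \<exists>g1 g2. char1 g1 \<and> char1 g2 \<and> \<chi> = (\<lambda>(p, q). g1 p * g2 q)}"

definition W2 :: "nmon option \<times> nmon option \<Rightarrow> nmon option \<times> nmon option
     \<Rightarrow> (nmon option \<times> nmon option) set" where
  "W2 x y = Wn (fst x) (fst y) \<times> Wn (snd x) (snd y)"

definition c2 :: "nmon option \<times> nmon option \<Rightarrow> nmon option \<times> nmon option
     \<Rightarrow> nmon option \<times> nmon option \<Rightarrow> rat" where
  "c2 x y w = cn (fst x) (fst y) (fst w) * cn (snd x) (snd y) (snd w)"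

lemma PC_mult: assumes "\<chi> \<in> PC" shows "\<chi> x * \<chi> y = (\<Sum>w\<in>W2 x y. c2 x y w * \<chi> w)"
proof -
  obtain g1 g2 where g: "char1 g1" "char1 g2" and chi: "\<chi> = (\<lambda>(p, q). g1 p * g2 q)"
    using assms unfolding PC_def by auto
  obtain p1 q1 p2 q2 where xy: "x = (p1, q1)" "y = (p2, q2)" by (cases x; cases y) auto
  have "\<chi> x * \<chi> y = (g1 p1 * g1 p2) * (g2 q1 * g2 q2)" using chi xy by simp
  also have "\<dots> = (\<Sum>w\<in>Wn p1 p2. cn p1 p2 w * g1 w) * (\<Sum>w\<in>Wn q1 q2. cn q1 q2 w * g2 w)"
    using g unfolding char1_def by metis
  also have "\<dots> = (\<Sum>w1\<in>Wn p1 p2. \<Sum>w2\<in>Wn q1 q2. (cn p1 p2 w1 * g1 w1) * (cn q1 q2 w2 * g2 w2))"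
    by (rule sum_product)
  also have "\<dots> = (\<Sum>(w1, w2)\<in>Wn p1 p2 \<times> Wn q1 q2. (cn p1 p2 w1 * g1 w1) * (cn q1 q2 w2 * g2 w2))"
    by (rule sum.cartesian_product)
  also have "\<dots> = (\<Sum>w\<in>W2 x y. c2 x y w * \<chi> w)"
    unfolding W2_def c2_def xy chi by (intro sum.cong) (auto simp: algebra_simps)
  finally show ?thesis .
qed

lemma PC_one: "\<chi> \<in> PC \<Longrightarrow> \<chi> (None, None) = 1"
  unfolding PC_def char1_def by auto

lemma artin_PC:
  fixes J :: "'j set" and f :: "'j \<Rightarrow> rat" and \<chi>s :: "'j \<Rightarrow> (nmon option \<times> nmon option \<Rightarrow> rat)"
  assumes "finite J" "\<chi>s ` J \<subseteq> PC" "\<And>x. (\<Sum>j\<in>J. f j * \<chi>s j x) = 0"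
  shows "(\<Sum>j\<in>{j\<in>J. \<chi>s j = \<chi>}. f j) = 0"
proof (cases "\<chi> \<in> \<chi>s ` J")
  case True
  define a where "a \<chi>' = (\<Sum>j\<in>{j\<in>J. \<chi>s j = \<chi>'}. f j)" for \<chi>'
  have "(\<Sum>\<chi>'\<in>\<chi>s ` J. a \<chi>' * \<chi>' x) = 0" for x
  proof -
    have "(\<Sum>j\<in>J. f j * \<chi>s j x) = (\<Sum>\<chi>'\<in>\<chi>s ` J. \<Sum>j\<in>{j\<in>J. \<chi>s j = \<chi>'}. f j * \<chi>s j x)"
      using assms(1) by (rule sum.image_gen)
    also have "\<dots> = (\<Sum>\<chi>'\<in>\<chi>s ` J. a \<chi>' * \<chi>' x)"
      unfolding a_def sum_distrib_right by (intro sum.cong) auto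
    finally show ?thesis using assms(3) by simp
  qed
  then have "\<forall>\<chi>'\<in>\<chi>s ` J. a \<chi>' = 0"
    apply (intro artin[where C=PC and W=W2 and c=c2 and u="(None,None)"])
        apply (erule PC_mult)
       apply (erule PC_one)
    using assms(1,2) by auto
  then have "a \<chi> = 0" using True by blast
  then show ?thesis unfolding a_def .
next
  case False
  then have "{j\<in>J. \<chi>s j = \<chi>} = {}" by auto
  then show ?thesis by (metis sum.empty)
qed
theorem lemma5p2:
  fixes n :: nat and e :: "nat \<Rightarrow> int" and ps :: "(nser \<times> nser) list" and d :: "int list"
  assumes "length d = length ps"
    and "distinct ps"
    and "\<forall>(g, g') \<in> set ps. ngrouplike n g \<and> ngrouplike n g' \<and> g \<noteq> nsone \<and> g' \<noteq> nsone"
    and "tlist_prod (map (\<lambda>i. tipow (texp (tgen (TI i))) (e i)) [0..<n]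
           @ map (\<lambda>((g, g'), k). tipow (tstar g g') k) (zip ps d)) = tone"
  shows "(\<forall>i<n. e i = 0) \<and> (\<forall>k \<in> set d. k = 0)"
proof -
  define m where "m = length ps"
  define G where "G j = fst (ps ! j)" for j
  define G' where "G' j = snd (ps ! j)" for j
  define D where "D j = (of_int (d ! j) :: rat)" for j
  have gl: "ngrouplike n (G j) \<and> ngrouplike n (G' j) \<and> G j \<noteq> nsone \<and> G' j \<noteq> nsone" if "j < m" for j
  proof -
    have "ps ! j \<in> set ps" using that m_def by simp
    then have "case ps ! j of (g, g') \<Rightarrow> ngrouplike n g \<and> ngrouplike n g' \<and> g \<noteq> nsone \<and> g' \<noteq> nsone"
      by (rule bspec[OF assms(3)])
    then show ?thesis unfolding G_def G'_def by (simp split: prod.splits)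
  qed
  define F1 where "F1 = (\<lambda>i. tipow (texp (tgen (TI i))) (e i))"
  define F2 where "F2 = (\<lambda>((g, g'), k). tipow (tstar g g') (k::int))"
  define Fs where "Fs = map F1 [0..<n] @ map F2 (zip ps d)"
  have F2e: "F2 x = tipow (texp (tt (fst (fst x)) (snd (fst x)))) (snd x)" for x
    unfolding F2_def tstar_def by (cases x) auto
  have c0: "\<forall>F\<in>set Fs. F {#} = 1"
    unfolding Fs_def by (auto simp: F1_def F2e tipow_simps texp_simps)
  have tl0: "tlist_prod Fs {#s#} = 0" for s
    using assms(4) tone_simps unfolding Fs_def F1_def F2_def by simp
  have key: "(\<Sum>F\<leftarrow>Fs. F {#s#}) = 0" for s
    using tlist_prod_simps[of Fs s] c0 tl0[of s] by simp
  have s1: "(\<Sum>F\<leftarrow>map F1 [0..<n]. F {#s#}) = (\<Sum>i\<in>{0..<n}. of_int (e i) * (if s = TI i then 1 else 0))" for s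
  proof -
    have "(\<Sum>F\<leftarrow>map F1 [0..<n]. F {#s#}) = (\<Sum>i\<leftarrow>[0..<n]. F1 i {#s#})"
      by (simp add: o_def)
    also have "\<dots> = (\<Sum>i\<in>{0..<n}. F1 i {#s#})"
      by (simp add: sum_set_upt_conv_sum_list_nat[symmetric])
    also have "\<dots> = (\<Sum>i\<in>{0..<n}. of_int (e i) * (if s = TI i then 1 else 0))"
      by (simp add: F1_def tipow_simps texp_simps tgen_single)
    finally show ?thesis .
  qed
  have s2: "(\<Sum>F\<leftarrow>map F2 (zip ps d). F {#s#}) = (\<Sum>j\<in>{0..<m}. D j * tt (G j) (G' j) {#s#})" for s
  proof -
    have "(\<Sum>F\<leftarrow>map F2 (zip ps d). F {#s#}) = (\<Sum>x\<leftarrow>zip ps d. F2 x {#s#})"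
      by (simp add: o_def)
    also have "\<dots> = (\<Sum>j\<in>{0..<m}. F2 (zip ps d ! j) {#s#})"
      using assms(1) by (simp add: sum_list_sum_nth m_def)
    also have "\<dots> = (\<Sum>j\<in>{0..<m}. D j * tt (G j) (G' j) {#s#})"
      using assms(1) by (intro sum.cong) (auto simp: F2e tipow_simps texp_simps m_def D_def G_def G'_def)
    finally show ?thesis .
  qed
  have rel: "(\<Sum>i\<in>{0..<n}. of_int (e i) * (if s = TI i then 1 else 0))
       + (\<Sum>j\<in>{0..<m}. D j * tt (G j) (G' j) {#s#}) = 0" for s
    using key[of s] s1[of s] s2[of s] unfolding Fs_def by simp
  have E: "\<forall>i<n. e i = 0"
  proof (intro allI impI)
    fix i assume "i < n"
    have "(\<Sum>i'\<in>{0..<n}. of_int (e i') * (if TI i = TI i' then 1 else 0))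
       = (\<Sum>i'\<in>{0..<n}. if i' = i then of_int (e i') else (0::rat))"
      by (intro sum.cong) auto
    also have "\<dots> = of_int (e i)" using \<open>i < n\<close> by simp
    finally have "(\<Sum>i'\<in>{0..<n}. of_int (e i') * (if TI i = TI i' then 1 else 0)) = (of_int (e i) :: rat)" .
    then show "e i = 0" using rel[of "TI i"] by (simp add: tt_TI)
  qed
  have R: "(\<Sum>j\<in>{0..<m}. D j * (G j (Some a) * G' j (Some b))) = 0" for a b
    using rel[of "TP a b"] by (simp add: tt_TP)
  have chG: "char1 (G j) \<and> char1 (G' j) \<and> G j \<noteq> nsone \<and> G' j \<noteq> nsone" if "j < m" for j
    using gl[OF that] grouplike_char1 by blast
  have G1: "G j None = 1 \<and> G' j None = 1" if "j < m" for j
    using chG[OF that] unfolding char1_def by auto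
  have R2: "(\<Sum>j\<in>{0..<m}. D j * ((G j p - nsone p) * (G' j q - nsone q))) = 0" for p q
  proof (cases "p = None \<or> q = None")
    case True
    then show ?thesis using G1 by (intro sum.neutral) (auto simp: nsone_def)
  next
    case False
    then obtain a b where ab: "p = Some a" "q = Some b" by auto
    then show ?thesis using R[of a b] by (simp add: nsone_def)
  qed
  define chi where "chi j i = (case i of 0 \<Rightarrow> (\<lambda>(p, q). G j p * G' j q)
      | Suc 0 \<Rightarrow> (\<lambda>(p, q). G j p * nsone q) | Suc (Suc 0) \<Rightarrow> (\<lambda>(p, q). nsone p * G' j q)
      | _ \<Rightarrow> (\<lambda>(p, q). nsone p * nsone q))" for j i
  define sg :: "nat \<Rightarrow> rat" where "sg i = (case i of 0 \<Rightarrow> 1 | Suc 0 \<Rightarrow> -1 | Suc (Suc 0) \<Rightarrow> -1 | _ \<Rightarrow> 1)" for i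
  define J where "J = {0..<m} \<times> {0..<4::nat}"
  have finJ: "finite J" unfolding J_def by simp
  have inner: "(\<Sum>i\<in>{0..<4::nat}. D j * sg i * chi j i x) = D j * ((G j (fst x) - nsone (fst x)) * (G' j (snd x) - nsone (snd x)))" for j x
    by (cases x) (simp add: numeral_eq_Suc atLeast0LessThan lessThan_Suc chi_def sg_def algebra_simps)
  have relJ: "(\<Sum>y\<in>J. D (fst y) * sg (snd y) * chi (fst y) (snd y) x) = 0" for x
  proof -
    have "(\<Sum>y\<in>J. D (fst y) * sg (snd y) * chi (fst y) (snd y) x)
        = (\<Sum>j\<in>{0..<m}. \<Sum>i\<in>{0..<4::nat}. D j * sg i * chi j i x)"
      unfolding J_def by (simp add: sum.cartesian_product split_beta)
    also have "\<dots> = 0" using R2[of "fst x" "snd x"] by (simp add: inner)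
    finally show ?thesis .
  qed
  have inPC: "(\<lambda>y. chi (fst y) (snd y)) ` J \<subseteq> PC"
  proof
    fix \<chi> assume "\<chi> \<in> (\<lambda>y. chi (fst y) (snd y)) ` J"
    then obtain j i where ji: "j < m" "\<chi> = chi j i" unfolding J_def by auto
    have c: "char1 (G j)" "char1 (G' j)" "char1 nsone" using chG[OF ji(1)] nsone_char1 by auto
    show "\<chi> \<in> PC"
    proof (cases i)
      case 0 then show ?thesis using c ji unfolding PC_def chi_def by auto
    next
      case (Suc i1) note i1 = this
      show ?thesis
      proof (cases i1)
        case 0 then show ?thesis using c ji i1 unfolding PC_def chi_def by auto
      next
        case (Suc i2)
        then show ?thesis using c ji i1 unfolding PC_def chi_def by (cases i2) auto
      qed
    qed
  qed
  have Dk: "D k = 0" if "k < m" for k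
  proof -
    have A: "(\<Sum>y\<in>{y\<in>J. chi (fst y) (snd y) = chi k 0}. D (fst y) * sg (snd y)) = 0"
      using artin_PC[OF finJ inPC, of "\<lambda>y. D (fst y) * sg (snd y)"] relJ by simp
    have "{y\<in>J. chi (fst y) (snd y) = chi k 0} = {(k, 0)}"
    proof
      show "{(k, 0)} \<subseteq> {y\<in>J. chi (fst y) (snd y) = chi k 0}" using that unfolding J_def by auto
    next
      show "{y\<in>J. chi (fst y) (snd y) = chi k 0} \<subseteq> {(k, 0)}"
      proof
        fix y assume y: "y \<in> {y\<in>J. chi (fst y) (snd y) = chi k 0}"
        obtain j i where yji: "y = (j, i)" by (cases y)
        have jm: "j < m" and i4: "i < 4" and eq: "chi j i = chi k 0" using y yji unfolding J_def by auto
        have H: "chi k 0 (p, q) = G k p * G' k q" for p q by (simp add: chi_def)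
        have gk: "G k None = 1" "G' k None = 1" "G k \<noteq> nsone" "G' k \<noteq> nsone"
          using G1[OF that] chG[OF that] by auto
        have gj: "G j None = 1" "G' j None = 1" using G1[OF jm] by auto
        have ns: "nsone None = 1" by (simp add: nsone_def)
        have "i = 0 \<and> j = k"
        proof (cases i)
          case 0
          have a1: "G j p = G k p" for p using fun_cong[OF eq, of "(p, None)"] 0 gj gk H by (simp add: chi_def)
          have a2: "G' j p = G' k p" for p using fun_cong[OF eq, of "(None, p)"] 0 gj gk H by (simp add: chi_def)
          have "ps ! j = ps ! k" using a1 a2 unfolding G_def G'_def by (simp add: prod_eq_iff fun_eq_iff)
          then have "j = k" using assms(2) jm that m_def by (simp add: nth_eq_iff_index_eq)
          then show ?thesis using 0 by simp
        next
          case (Suc i1) note i1 = this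
          show ?thesis
          proof (cases i1)
            case 0
            have "nsone p = G' k p" for p using fun_cong[OF eq, of "(None, p)"] i1 0 gj gk H by (simp add: chi_def)
            then show ?thesis using gk by auto
          next
            case (Suc i2)
            have "nsone p = G k p" for p using fun_cong[OF eq, of "(p, None)"] i1 Suc gj gk H ns
              by (cases i2) (simp_all add: chi_def)
            then show ?thesis using gk by auto
          qed
        qed
        then show "y \<in> {(k, 0)}" using yji by simp
      qed
    qed
    then show ?thesis using A by (simp add: sg_def)
  qed
  have "\<forall>k \<in> set d. k = 0"
  proof
    fix k assume "k \<in> set d"
    then obtain j where "j < length d" "k = d ! j" by (auto simp: in_set_conv_nth)
    then show "k = 0" using Dk[of j] assms(1) m_def D_def by simp
  qed
  then show ?thesis using E by simp
qed

end
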